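(* Let $X\in G$, let $(s_1,\ldots,s_k)$ be an oriented path in $\Gamma_X$ starting at a vertex $Y$, and let $\alpha=s_1\cdots s_k\in P$. (1) If $\alpha\preccurlyeq Y^\circ$, then $(s_1,\ldots,s_k)$ is an oriented black path. (2) If $\alpha\preccurlyeq (Y^{-1})^\circ$, then $(s_1,\ldots,s_k)$ is an oriented grey path.
   Context: $G$ is a Garside group: it has a lattice order $\preccurlyeq$ invariant under left multiplication ($a\preccurlyeq b$ iff $a^{-1}b\in P$, where $P=\{p\in G:1\preccurlyeq p\}$), with meet $\wedge$; there is a Garside element $\Delta\in P$ such that $[1,\Delta]$ is finite and generates $G$ and $\Delta^{-1}P\Delta=P$; and $P$ is atomic. Elements of $[1,\Delta]$ are simple. $\tau(x)=\Delta^{-1}x\Delta$; $X^a=a^{-1}Xa$. Left normal form $X=\Delta^p x_1\cdots x_r$: $p$ maximal with $\Delta^p\preccurlyeq X$, each $x_i\neq 1$ the maximal simple prefix of $x_i\cdots x_r$; $\inf X=p$, $\sup X=p+r$. $\iota(X)=\tau^{-p}(x_1)$ if $r>0$, $\iota(\Delta^p)=1$. $Y^\circ=Y\Delta^{-\inf Y}$. $\mathbf c(X)=X^{\iota(X)}$. $SSS(X)$: conjugates of $X$ of maximal infimum and minimal supremum; $USS(X)$: those $Y\in SSS(X)$ with $\mathbf c^m(Y)=Y$ for some $m>0$. A minimal simple element for $Y\in USS(X)$ is a simple $s\neq1$ with $Y^s\in USS(X)$ such that no prefix $t\ne1$, $t\neq s$ of $s$ has $Y^t\in USS(X)$. $\Gamma_X$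 is the directed graph with vertex set $USS(X)$ and an arrow labeled $s$ from $Y$ to $Y^s$ for each $Y\in USS(X)$ and each minimal simple element $s$ for $Y$. An arrow $s$ starting at $Y$ is black if $s\preccurlyeq\iota(Y)$ and grey if $s\preccurlyeq\iota(Y^{-1})$ (it may be both). An oriented path is a sequence of arrows $(s_1,\ldots,s_k)$, each starting at the endpoint of the previous one; it is black (grey) if all its arrows are black (grey). *)

theory Defs
  imports "HOL-Algebra.Generated_Groups"
begin

text \<open>A Garside group is given by a group G, its positive monoid P and a Garside
element Delta. All notions are parametrised explicitly by (G, P, Delta).\<close>

definition prec :: "('a, 'b) monoid_scheme \<Rightarrow> 'a set \<Rightarrow> 'a \<Rightarrow> 'a \<Rightarrow> bool" where
  "prec G P a b \<longleftrightarrow> a \<in> carrier G \<and> b \<in> carrier G \<and> inv\<^bsub>G\<^esub> a \<otimes>\<^bsub>G\<^esub> b \<in> P"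

definition list_prod :: "('a, 'b) monoid_scheme \<Rightarrow> 'a list \<Rightarrow> 'a" where
  "list_prod G xs = foldr (\<lambda>x acc. x \<otimes>\<^bsub>G\<^esub> acc) xs \<one>\<^bsub>G\<^esub>"

definition is_glb :: "('a, 'b) monoid_scheme \<Rightarrow> 'a set \<Rightarrow> 'a \<Rightarrow> 'a \<Rightarrow> 'a \<Rightarrow> bool" where
  "is_glb G P a b m \<longleftrightarrow> prec G P m a \<and> prec G P m b \<and>
     (\<forall>c. prec G P c a \<and> prec G P c b \<longrightarrow> prec G P c m)"

definition is_lub :: "('a, 'b) monoid_scheme \<Rightarrow> 'a set \<Rightarrow> 'a \<Rightarrow> 'a \<Rightarrow> 'a \<Rightarrow> bool" where
  "is_lub G P a b j \<longleftrightarrow> prec G P a j \<and> prec G P b j \<and>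
     (\<forall>c. prec G P a c \<and> prec G P b c \<longrightarrow> prec G P j c)"

definition simples :: "('a, 'b) monoid_scheme \<Rightarrow> 'a set \<Rightarrow> 'a \<Rightarrow> 'a set" where
  "simples G P \<Delta> = {s. prec G P \<one>\<^bsub>G\<^esub> s \<and> prec G P s \<Delta>}"

definition atomic :: "('a, 'b) monoid_scheme \<Rightarrow> 'a set \<Rightarrow> bool" where
  "atomic G P \<longleftrightarrow> (\<forall>x\<in>P. \<exists>N::nat. \<forall>xs. set xs \<subseteq> P - {\<one>\<^bsub>G\<^esub>} \<and> list_prod G xs = x
       \<longrightarrow> length xs \<le> N)"

definition garside :: "('a, 'b) monoid_scheme \<Rightarrow> 'a set \<Rightarrow> 'a \<Rightarrow> bool" where
  "garside G P \<Delta> \<longleftrightarrow>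
     group G \<and>
     P \<subseteq> carrier G \<and> \<one>\<^bsub>G\<^esub> \<in> P \<and>
     (\<forall>a\<in>P. \<forall>b\<in>P. a \<otimes>\<^bsub>G\<^esub> b \<in> P) \<and>
     (\<forall>a\<in>P. inv\<^bsub>G\<^esub> a \<in> P \<longrightarrow> a = \<one>\<^bsub>G\<^esub>) \<and>
     (\<forall>a\<in>carrier G. \<forall>b\<in>carrier G. (\<exists>m. is_glb G P a b m) \<and> (\<exists>j. is_lub G P a b j)) \<and>
     \<Delta> \<in> P \<and>
     finite (simples G P \<Delta>) \<and>
     generate G (simples G P \<Delta>) = carrier G \<and>
     (\<lambda>p. inv\<^bsub>G\<^esub> \<Delta> \<otimes>\<^bsub>G\<^esub> p \<otimes>\<^bsub>G\<^esub> \<Delta>) ` P = P \<and>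
     atomic G P"

definition conj :: "('a, 'b) monoid_scheme \<Rightarrow> 'a \<Rightarrow> 'a \<Rightarrow> 'a" where
  "conj G X a = inv\<^bsub>G\<^esub> a \<otimes>\<^bsub>G\<^esub> X \<otimes>\<^bsub>G\<^esub> a"

definition tau_pow :: "('a, 'b) monoid_scheme \<Rightarrow> 'a \<Rightarrow> int \<Rightarrow> 'a \<Rightarrow> 'a" where
  "tau_pow G \<Delta> k x = conj G x (\<Delta> [^]\<^bsub>G\<^esub> k)"

definition ginf :: "('a, 'b) monoid_scheme \<Rightarrow> 'a set \<Rightarrow> 'a \<Rightarrow> 'a \<Rightarrow> int" where
  "ginf G P \<Delta> X = (GREATEST p::int. prec G P (\<Delta> [^]\<^bsub>G\<^esub> p) X)"

definition is_lnf :: "('a, 'b) monoid_scheme \<Rightarrow> 'a set \<Rightarrow> 'a \<Rightarrow> 'a \<Rightarrow> int \<Rightarrow> 'a list \<Rightarrow> bool" where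
  "is_lnf G P \<Delta> X p xs \<longleftrightarrow>
     p = ginf G P \<Delta> X \<and>
     X = (\<Delta> [^]\<^bsub>G\<^esub> p) \<otimes>\<^bsub>G\<^esub> list_prod G xs \<and>
     (\<forall>i<length xs. xs ! i \<noteq> \<one>\<^bsub>G\<^esub> \<and>
        xs ! i \<in> simples G P \<Delta> \<and> prec G P (xs ! i) (list_prod G (drop i xs)) \<and>
        (\<forall>s\<in>simples G P \<Delta>. prec G P s (list_prod G (drop i xs)) \<longrightarrow> prec G P s (xs ! i)))"

definition lnf_factors :: "('a, 'b) monoid_scheme \<Rightarrow> 'a set \<Rightarrow> 'a \<Rightarrow> 'a \<Rightarrow> 'a list" where
  "lnf_factors G P \<Delta> X = (THE xs. is_lnf G P \<Delta> X (ginf G P \<Delta> X) xs)"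

definition gsup :: "('a, 'b) monoid_scheme \<Rightarrow> 'a set \<Rightarrow> 'a \<Rightarrow> 'a \<Rightarrow> int" where
  "gsup G P \<Delta> X = ginf G P \<Delta> X + int (length (lnf_factors G P \<Delta> X))"

definition iota :: "('a, 'b) monoid_scheme \<Rightarrow> 'a set \<Rightarrow> 'a \<Rightarrow> 'a \<Rightarrow> 'a" where
  "iota G P \<Delta> X =
     (if lnf_factors G P \<Delta> X = [] then \<one>\<^bsub>G\<^esub>
      else tau_pow G \<Delta> (- ginf G P \<Delta> X) (hd (lnf_factors G P \<Delta> X)))"

definition circ :: "('a, 'b) monoid_scheme \<Rightarrow> 'a set \<Rightarrow> 'a \<Rightarrow> 'a \<Rightarrow> 'a" where
  "circ G P \<Delta> Y = Y \<otimes>\<^bsub>G\<^esub> (\<Delta> [^]\<^bsub>G\<^esub> (- ginf G P \<Delta> Y))"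

definition cycling :: "('a, 'b) monoid_scheme \<Rightarrow> 'a set \<Rightarrow> 'a \<Rightarrow> 'a \<Rightarrow> 'a" where
  "cycling G P \<Delta> X = conj G X (iota G P \<Delta> X)"

definition conjugates :: "('a, 'b) monoid_scheme \<Rightarrow> 'a \<Rightarrow> 'a set" where
  "conjugates G X = {conj G X a | a. a \<in> carrier G}"

definition SSS :: "('a, 'b) monoid_scheme \<Rightarrow> 'a set \<Rightarrow> 'a \<Rightarrow> 'a \<Rightarrow> 'a set" where
  "SSS G P \<Delta> X = {Y \<in> conjugates G X. \<forall>Z\<in>conjugates G X.
       ginf G P \<Delta> Z \<le> ginf G P \<Delta> Y \<and> gsup G P \<Delta> Y \<le> gsup G P \<Delta> Z}"

definition USS :: "('a, 'b) monoid_scheme \<Rightarrow> 'a set \<Rightarrow> 'a \<Rightarrow> 'a \<Rightarrow> 'a set" where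
  "USS G P \<Delta> X = {Y \<in> SSS G P \<Delta> X. \<exists>m>0. (cycling G P \<Delta> ^^ m) Y = Y}"

definition minimal_simple :: "('a, 'b) monoid_scheme \<Rightarrow> 'a set \<Rightarrow> 'a \<Rightarrow> 'a \<Rightarrow> 'a \<Rightarrow> 'a \<Rightarrow> bool" where
  "minimal_simple G P \<Delta> X Y s \<longleftrightarrow>
     s \<in> simples G P \<Delta> \<and> s \<noteq> \<one>\<^bsub>G\<^esub> \<and> conj G Y s \<in> USS G P \<Delta> X \<and>
     (\<forall>t. prec G P \<one>\<^bsub>G\<^esub> t \<and> prec G P t s \<and> t \<noteq> \<one>\<^bsub>G\<^esub> \<and> t \<noteq> s
        \<longrightarrow> conj G Y t \<notin> USS G P \<Delta> X)"

fun oriented_path :: "('a, 'b) monoid_scheme \<Rightarrow> 'a set \<Rightarrow> 'a \<Rightarrow> 'a \<Rightarrow> 'a \<Rightarrow> 'a list \<Rightarrow> bool" where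
  "oriented_path G P \<Delta> X Y [] \<longleftrightarrow> Y \<in> USS G P \<Delta> X"
| "oriented_path G P \<Delta> X Y (s # ss) \<longleftrightarrow> Y \<in> USS G P \<Delta> X \<and> minimal_simple G P \<Delta> X Y s \<and>
     oriented_path G P \<Delta> X (conj G Y s) ss"

fun black_path :: "('a, 'b) monoid_scheme \<Rightarrow> 'a set \<Rightarrow> 'a \<Rightarrow> 'a \<Rightarrow> 'a list \<Rightarrow> bool" where
  "black_path G P \<Delta> Y [] \<longleftrightarrow> True"
| "black_path G P \<Delta> Y (s # ss) \<longleftrightarrow> prec G P s (iota G P \<Delta> Y) \<and> black_path G P \<Delta> (conj G Y s) ss"

fun grey_path :: "('a, 'b) monoid_scheme \<Rightarrow> 'a set \<Rightarrow> 'a \<Rightarrow> 'a \<Rightarrow> 'a list \<Rightarrow> bool" where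
  "grey_path G P \<Delta> Y [] \<longleftrightarrow> True"
| "grey_path G P \<Delta> Y (s # ss) \<longleftrightarrow> prec G P s (iota G P \<Delta> (inv\<^bsub>G\<^esub> Y)) \<and> grey_path G P \<Delta> (conj G Y s) ss"

end

theory Submission
  imports Defs
begin

locale garloc = group G for G :: "('a, 'b) monoid_scheme" (structure) +
  fixes P :: "'a set" and D :: 'a
  assumes gar: "garside G P D"
begin

abbreviation pl :: "'a \<Rightarrow> 'a \<Rightarrow> bool" where "pl a b \<equiv> prec G P a b"
abbreviation SS :: "'a set" where "SS \<equiv> simples G P D"

lemma gar_f1: "P \<subseteq> carrier G"
  using gar unfolding garside_def by (elim conjE) assumption
lemma gar_f2: "\<one> \<in> P"
  using gar unfolding garside_def by (elim conjE) assumption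
lemma gar_f3: "\<forall>a\<in>P. \<forall>b\<in>P. a \<otimes> b \<in> P"
  using gar unfolding garside_def by (elim conjE) assumption
lemma gar_f4: "\<forall>a\<in>P. inv a \<in> P \<longrightarrow> a = \<one>"
  using gar unfolding garside_def by (elim conjE) assumption
lemma gar_f5: "\<forall>a\<in>carrier G. \<forall>b\<in>carrier G. (\<exists>m. is_glb G P a b m) \<and> (\<exists>j. is_lub G P a b j)"
  using gar unfolding garside_def by (elim conjE) assumption
lemma gar_f6: "D \<in> P"
  using gar unfolding garside_def by (elim conjE) assumption
lemma gar_f7: "generate G SS = carrier G"
  using gar unfolding garside_def by (elim conjE) assumption
lemma gar_f8: "(\<lambda>p. inv D \<otimes> p \<otimes> D) ` P = P"
  using gar unfolding garside_def by (elim conjE) assumption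
lemmas gar_facts = gar_f1 gar_f2 gar_f3 gar_f4 gar_f5 gar_f6 gar_f7 gar_f8

lemma P_carr: "P \<subseteq> carrier G" by (rule gar_facts)
lemma P_carr': "x \<in> P \<Longrightarrow> x \<in> carrier G" using P_carr by auto
lemma one_P[simp]: "\<one> \<in> P" by (rule gar_facts)
lemma mult_P: "a \<in> P \<Longrightarrow> b \<in> P \<Longrightarrow> a \<otimes> b \<in> P" using gar_facts(3) by blast
lemma antisym_P: "a \<in> P \<Longrightarrow> inv a \<in> P \<Longrightarrow> a = \<one>" using gar_facts(4) by blast
lemma glb_ex: "a \<in> carrier G \<Longrightarrow> b \<in> carrier G \<Longrightarrow> \<exists>m. is_glb G P a b m" using gar_facts(5) by blast
lemma lub_ex: "a \<in> carrier G \<Longrightarrow> b \<in> carrier G \<Longrightarrow> \<exists>m. is_lub G P a b m" using gar_facts(5) by blast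
lemma D_P: "D \<in> P" by (rule gar_facts)
lemma D_carr[simp]: "D \<in> carrier G" using D_P P_carr' by auto
lemma gen: "generate G SS = carrier G" by (rule gar_facts)
lemma tauP: "(\<lambda>p. inv D \<otimes> p \<otimes> D) ` P = P" by (rule gar_facts)

lemma cancel1[simp]: "x \<in> carrier G \<Longrightarrow> y \<in> carrier G \<Longrightarrow> x \<otimes> (inv x \<otimes> y) = y"
  by (simp add: m_assoc[symmetric])
lemma cancel2[simp]: "x \<in> carrier G \<Longrightarrow> y \<in> carrier G \<Longrightarrow> inv x \<otimes> (x \<otimes> y) = y"
  by (simp add: m_assoc[symmetric])

lemma tau1_P: assumes "p \<in> P" shows "inv D \<otimes> p \<otimes> D \<in> P"
proof -
  have "inv D \<otimes> p \<otimes> D \<in> (\<lambda>p. inv D \<otimes> p \<otimes> D) ` P" using assms by (rule imageI)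
  then show ?thesis by (simp only: tauP)
qed
lemma taum1_P: assumes "p \<in> P" shows "D \<otimes> p \<otimes> inv D \<in> P"
proof -
  have "p \<in> (\<lambda>p. inv D \<otimes> p \<otimes> D) ` P" using assms by (simp only: tauP)
  then obtain q where q: "q \<in> P" "p = inv D \<otimes> q \<otimes> D" by (rule imageE)
  have "D \<otimes> p \<otimes> inv D = q" using q P_carr' by (simp add: m_assoc)
  with q show ?thesis by simp
qed

lemma pl_def': "pl a b \<longleftrightarrow> a \<in> carrier G \<and> b \<in> carrier G \<and> inv a \<otimes> b \<in> P"
  by (simp add: prec_def)

lemma pl_refl: "a \<in> carrier G \<Longrightarrow> pl a a" by (simp add: pl_def')
lemma pl_trans: assumes "pl a b" "pl b c" shows "pl a c"
proof -
  have c: "a \<in> carrier G" "b \<in> carrier G" "c \<in> carrier G" using assms by (auto simp: pl_def')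
  have "(inv a \<otimes> b) \<otimes> (inv b \<otimes> c) = inv a \<otimes> (b \<otimes> inv b) \<otimes> c" using c by (simp add: m_assoc)
  then have "inv a \<otimes> c = (inv a \<otimes> b) \<otimes> (inv b \<otimes> c)" using c by (simp add: m_assoc[symmetric])
  then show ?thesis using assms mult_P by (auto simp: pl_def')
qed
lemma pl_antisym: assumes "pl a b" "pl b a" shows "a = b"
proof -
  have c: "a \<in> carrier G" "b \<in> carrier G" using assms by (auto simp: pl_def')
  have "inv (inv a \<otimes> b) = inv b \<otimes> a" using c by (simp add: inv_mult_group)
  then have "inv a \<otimes> b = \<one>" using assms antisym_P by (auto simp: pl_def')
  then have "b = a \<otimes> \<one>" using c inv_solve_left'[of "\<one>" a b] by simp
  then show ?thesis using c by simp
qed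
lemma pl_carr: "pl a b \<Longrightarrow> a \<in> carrier G \<and> b \<in> carrier G" by (simp add: pl_def')
lemma pl_lmult: assumes "c \<in> carrier G" "a \<in> carrier G" "b \<in> carrier G"
  shows "pl (c \<otimes> a) (c \<otimes> b) \<longleftrightarrow> pl a b"
proof -
  have "inv (c \<otimes> a) \<otimes> (c \<otimes> b) = inv a \<otimes> b" using assms
    by (simp add: inv_mult_group m_assoc[symmetric]) (simp add: m_assoc)
  then show ?thesis using assms by (simp add: pl_def')
qed
lemma pl_lmultD: "pl (c \<otimes> a) (c \<otimes> b) \<Longrightarrow> c \<in> carrier G \<Longrightarrow> a \<in> carrier G \<Longrightarrow> b \<in> carrier G \<Longrightarrow> pl a b"
  using pl_lmult by blast
lemma pl_lmultI: "pl a b \<Longrightarrow> c \<in> carrier G \<Longrightarrow> pl (c \<otimes> a) (c \<otimes> b)"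
  using pl_lmult pl_carr by blast
lemma pl_one: "pl \<one> a \<longleftrightarrow> a \<in> P" using P_carr' by (auto simp: pl_def')
lemma pl_right: assumes "a \<in> carrier G" "p \<in> carrier G" shows "pl a (a \<otimes> p) \<longleftrightarrow> p \<in> P"
  using assms by (simp add: pl_def')
lemma pl_rightI: assumes "a \<in> carrier G" "p \<in> P" shows "pl a (a \<otimes> p)"
  using assms P_carr' by (simp add: pl_def')
lemma pl_E: assumes "pl a b" obtains p where "p \<in> P" "b = a \<otimes> p"
proof -
  have c: "a \<in> carrier G" "b \<in> carrier G" using assms by (auto simp: pl_def')
  have "b = a \<otimes> (inv a \<otimes> b)" using c by (simp add: m_assoc[symmetric])
  then show ?thesis using that assms by (auto simp: pl_def')
qed
lemma pl_one_P: "pl a \<one> \<Longrightarrow> a \<in> P \<Longrightarrow> a = \<one>"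
  using antisym_P by (auto simp: pl_def')


lemma conj_carr[simp]: "x \<in> carrier G \<Longrightarrow> c \<in> carrier G \<Longrightarrow> conj G x c \<in> carrier G"
  by (simp add: conj_def)
lemma conj_mult: "x \<in> carrier G \<Longrightarrow> y \<in> carrier G \<Longrightarrow> c \<in> carrier G \<Longrightarrow>
   conj G (x \<otimes> y) c = conj G x c \<otimes> conj G y c"
  by (simp add: conj_def m_assoc)
lemma conj_inv: "x \<in> carrier G \<Longrightarrow> c \<in> carrier G \<Longrightarrow> conj G (inv x) c = inv (conj G x c)"
  by (simp add: conj_def m_assoc inv_mult_group)
lemma conj_one[simp]: "c \<in> carrier G \<Longrightarrow> conj G \<one> c = \<one>"
  by (simp add: conj_def)
lemma conj_by_one[simp]: "x \<in> carrier G \<Longrightarrow> conj G x \<one> = x"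
  by (simp add: conj_def)
lemma conj_conj: "x \<in> carrier G \<Longrightarrow> a \<in> carrier G \<Longrightarrow> b \<in> carrier G \<Longrightarrow>
   conj G (conj G x a) b = conj G x (a \<otimes> b)"
  by (simp add: conj_def m_assoc inv_mult_group)

lemma conjD_P: "x \<in> P \<Longrightarrow> conj G x D \<in> P"
  using tau1_P by (simp add: conj_def)
lemma conjDi_P: "x \<in> P \<Longrightarrow> conj G x (inv D) \<in> P"
  using taum1_P by (simp add: conj_def)

lemma conjP_nat1: "x \<in> P \<Longrightarrow> conj G x (D [^] (n::nat)) \<in> P"
proof (induction n)
  case 0 then show ?case using P_carr' by simp
next
  case (Suc n)
  have x: "x \<in> carrier G" using Suc P_carr' by auto
  have 1: "conj G x (D [^] Suc n) = conj G (conj G x (D [^] n)) D"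
    using x by (simp add: conj_conj)
  show ?case unfolding 1 using Suc conjD_P by simp
qed
lemma conjP_nat2: "x \<in> P \<Longrightarrow> conj G x (inv D [^] (n::nat)) \<in> P"
proof (induction n)
  case 0 then show ?case using P_carr' by simp
next
  case (Suc n)
  have x: "x \<in> carrier G" using Suc P_carr' by auto
  have 1: "conj G x (inv D [^] Suc n) = conj G (conj G x (inv D [^] n)) (inv D)"
    using x by (simp add: conj_conj)
  show ?case unfolding 1 using Suc conjDi_P by simp
qed
lemma conjP: assumes "x \<in> P" shows "conj G x (D [^] (k::int)) \<in> P"
proof (cases "k \<ge> 0")
  case True
  then obtain n where "k = int n" using nonneg_int_cases by blast
  then show ?thesis using conjP_nat1 assms by (simp add: int_pow_int)
next
  case False
  define n where "n = nat (-k)"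
  have "k = - int n" using False by (simp add: n_def)
  then have "D [^] k = inv (D [^] n)" by (simp add: int_pow_neg_int)
  also have "\<dots> = inv D [^] n" by (simp add: nat_pow_inv)
  finally show ?thesis using conjP_nat2 assms by simp
qed

lemma Dpow_carr[simp]: "D [^] (k::int) \<in> carrier G" by simp

lemma Dpow_add: "D [^] (k + l :: int) = D [^] k \<otimes> D [^] l" by (simp add: int_pow_mult)

lemma conj_cancel: "x \<in> carrier G \<Longrightarrow> conj G (conj G x (D [^] (k::int))) (D [^] (-k)) = x"
  by (simp add: conj_conj Dpow_add[symmetric])

lemma conj_pl: assumes "pl a b" shows "pl (conj G a (D [^] (k::int))) (conj G b (D [^] k))"
proof -
  have c: "a \<in> carrier G" "b \<in> carrier G" using assms pl_carr by auto
  have "inv (conj G a (D [^] k)) \<otimes> conj G b (D [^] k) = conj G (inv a \<otimes> b) (D [^] k)"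
    using c by (simp add: conj_mult conj_inv)
  then show ?thesis using c assms conjP by (simp add: pl_def')
qed
lemma conj_pl_iff: assumes "a \<in> carrier G" "b \<in> carrier G"
  shows "pl (conj G a (D [^] (k::int))) (conj G b (D [^] k)) \<longleftrightarrow> pl a b"
proof
  assume "pl (conj G a (D [^] (k::int))) (conj G b (D [^] k))"
  from conj_pl[OF this, of "-k"] show "pl a b" using assms by (simp add: conj_cancel)
qed (rule conj_pl)

lemma conj_D: "conj G D (D [^] (k::int)) = D"
proof -
  have "D \<otimes> D [^] k = D [^] k \<otimes> D"
    using Dpow_add[of 1 k] Dpow_add[of k 1] by (simp add: add.commute)
  then show ?thesis by (simp add: conj_def m_assoc)
qed

lemma SS_iff: "s \<in> SS \<longleftrightarrow> s \<in> P \<and> inv s \<otimes> D \<in> P"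
  using P_carr' by (auto simp: simples_def pl_def')
lemma SS_P: "s \<in> SS \<Longrightarrow> s \<in> P" by (simp add: SS_iff)
lemma SS_carr: "s \<in> SS \<Longrightarrow> s \<in> carrier G" by (simp add: SS_iff P_carr')
lemma SS_pl: "s \<in> SS \<Longrightarrow> pl s D" by (simp add: simples_def)
lemma SS_I: "pl \<one> s \<Longrightarrow> pl s D \<Longrightarrow> s \<in> SS" by (simp add: simples_def)
lemma D_SS: "D \<in> SS" using D_P by (simp add: SS_iff)
lemma one_SS: "\<one> \<in> SS" using D_P by (simp add: SS_iff)

lemma conj_SS: assumes "s \<in> SS" shows "conj G s (D [^] (k::int)) \<in> SS"
proof -
  have c: "s \<in> carrier G" using assms SS_carr by auto
  have "pl (conj G \<one> (D [^] k)) (conj G s (D [^] k))" "pl (conj G s (D [^] k)) (conj G D (D [^] k))"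
    using assms conj_pl[of \<one> s k] conj_pl[of s D k] by (simp_all add: simples_def)
  then show ?thesis using conj_D by (auto simp: simples_def)
qed


lemma dl_SS: assumes "s \<in> SS" shows "inv s \<otimes> D \<in> SS"
proof -
  have c: "s \<in> carrier G" using assms SS_carr by auto
  have "inv (inv s \<otimes> D) \<otimes> D = inv D \<otimes> s \<otimes> D" using c by (simp add: inv_mult_group m_assoc)
  then show ?thesis using assms tau1_P[of s] SS_P[OF assms] by (simp add: SS_iff)
qed
lemma dl_dl: "s \<in> carrier G \<Longrightarrow> inv (inv s \<otimes> D) \<otimes> D = conj G s D"
  by (simp add: inv_mult_group m_assoc conj_def)
lemma dl_mult: "s \<in> carrier G \<Longrightarrow> s \<otimes> (inv s \<otimes> D) = D" by simp

lemma suffix_SS: assumes "c \<in> P" "pl c t" "t \<in> SS" shows "inv c \<otimes> t \<in> SS"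
proof -
  have c: "c \<in> carrier G" "t \<in> carrier G" using assms P_carr' SS_carr by auto
  have "inv (inv c \<otimes> t) \<otimes> D = (inv t \<otimes> D) \<otimes> (inv D \<otimes> c \<otimes> D)" using c by (simp add: inv_mult_group m_assoc)
  moreover have "inv t \<otimes> D \<in> P" using assms SS_iff by auto
  ultimately have "inv (inv c \<otimes> t) \<otimes> D \<in> P" using tau1_P[OF assms(1)] mult_P by simp
  moreover have "inv c \<otimes> t \<in> P" using assms by (simp add: pl_def')
  ultimately show ?thesis by (simp add: SS_iff)
qed

lemma D_le_aD: assumes "a \<in> P" shows "pl D (a \<otimes> D)"
proof -
  have c: "a \<in> carrier G" using assms P_carr' by auto
  have "a \<otimes> D = D \<otimes> conj G a D" using c by (simp add: conj_def m_assoc[symmetric])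
  then show ?thesis using pl_rightI[of D "conj G a D"] conjD_P[OF assms] by simp
qed

lemma lub_E: assumes "a \<in> carrier G" "b \<in> carrier G"
  obtains L where "pl a L" "pl b L" "\<And>c. pl a c \<Longrightarrow> pl b c \<Longrightarrow> pl L c"
  using lub_ex[OF assms] unfolding is_lub_def by blast
lemma glb_E: assumes "a \<in> carrier G" "b \<in> carrier G"
  obtains L where "pl L a" "pl L b" "\<And>c. pl c a \<Longrightarrow> pl c b \<Longrightarrow> pl c L"
  using glb_ex[OF assms] unfolding is_glb_def by blast

lemma H_lemma: assumes a: "a \<in> P" and b: "b \<in> P" and u: "u \<in> SS" and c0: "c0 \<in> carrier G"
  and hd: "\<And>v. v \<in> SS \<Longrightarrow> pl v b \<Longrightarrow> pl v c0" and le: "pl u (a \<otimes> b)"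
  shows "pl u (a \<otimes> c0)"
proof -
  have ac: "a \<in> carrier G" "b \<in> carrier G" "u \<in> carrier G" using a b u P_carr' SS_carr by auto
  obtain L where L: "pl a L" "pl u L" "\<And>c. pl a c \<Longrightarrow> pl u c \<Longrightarrow> pl L c" using lub_E ac by metis
  have "pl a (a \<otimes> b)" using pl_rightI ac b by simp
  then have L1: "pl L (a \<otimes> b)" using L le by simp
  have "pl u (a \<otimes> D)" using pl_trans[OF SS_pl[OF u] D_le_aD[OF a]] .
  moreover have "pl a (a \<otimes> D)" using pl_rightI ac D_P by simp
  ultimately have L2: "pl L (a \<otimes> D)" using L by simp
  obtain c where c: "c \<in> P" "L = a \<otimes> c" using pl_E[OF L(1)] by metis
  have cc: "c \<in> carrier G" using c P_carr' by auto
  have "pl c b" using L1 c pl_lmult ac cc by simp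
  moreover have "pl c D" using L2 c pl_lmult ac cc by simp
  ultimately have "c \<in> SS" using c by (simp add: SS_I pl_one)
  then have "pl c c0" using hd \<open>pl c b\<close> by simp
  then have "pl L (a \<otimes> c0)" using c pl_lmult ac cc c0 by simp
  then show ?thesis using L(2) pl_trans by blast
qed

lemma pair_lemma: assumes s: "s \<in> SS" and t: "t \<in> SS"
  and cop: "\<And>v. v \<in> SS \<Longrightarrow> pl v (inv s \<otimes> D) \<Longrightarrow> pl v t \<Longrightarrow> v = \<one>"
  and u: "u \<in> SS" and le: "pl u (s \<otimes> t)"
  shows "pl u s"
proof -
  have ac: "s \<in> carrier G" "t \<in> carrier G" "u \<in> carrier G" using s t u SS_carr by auto
  obtain L where L: "pl s L" "pl u L" "\<And>c. pl s c \<Longrightarrow> pl u c \<Longrightarrow> pl L c" using lub_E ac by metis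
  have "pl s (s \<otimes> t)" using pl_rightI ac SS_P[OF t] by simp
  then have L1: "pl L (s \<otimes> t)" using L le by simp
  have L2: "pl L D" using L SS_pl s u by simp
  obtain c where c: "c \<in> P" "L = s \<otimes> c" using pl_E[OF L(1)] by metis
  have cc: "c \<in> carrier G" using c P_carr' by auto
  have ct: "pl c t" using L1 c pl_lmult ac cc by simp
  have e: "pl (s \<otimes> c) (s \<otimes> (inv s \<otimes> D)) = pl c (inv s \<otimes> D)" by (rule pl_lmult) (use ac cc in auto)
  have cd: "pl c (inv s \<otimes> D)" using e L2 c ac by simp
  have "pl c D" using pl_trans[OF ct SS_pl[OF t]] .
  then have "c \<in> SS" using c by (simp add: SS_I pl_one)
  then have "c = \<one>" using cop cd ct by simp
  then have "L = s" using c ac by simp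
  then show ?thesis using L(2) by simp
qed

lemma greedy_cop: assumes y: "y \<in> SS" and x: "x \<in> carrier G" and B: "pl x B"
  and mx: "\<And>w. w \<in> SS \<Longrightarrow> pl w (y \<otimes> B) \<Longrightarrow> pl w y"
  and v: "v \<in> SS" and v1: "pl v (inv y \<otimes> D)" and v2: "pl v x"
  shows "v = \<one>"
proof -
  have ac: "y \<in> carrier G" "v \<in> carrier G" "B \<in> carrier G" using y v SS_carr B pl_carr by auto
  have e: "pl (y \<otimes> v) (y \<otimes> (inv y \<otimes> D)) = pl v (inv y \<otimes> D)" by (rule pl_lmult) (use ac in auto)
  have "pl (y \<otimes> v) D" using e v1 ac by simp
  moreover have "y \<otimes> v \<in> P" using mult_P SS_P y v by simp
  ultimately have yv: "y \<otimes> v \<in> SS" by (simp add: SS_I pl_one)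
  have "pl v B" using pl_trans v2 B by blast
  then have "pl (y \<otimes> v) (y \<otimes> B)" using pl_lmult ac by simp
  then have "pl (y \<otimes> v) y" using mx yv by simp
  then have "pl (y \<otimes> v) (y \<otimes> \<one>)" using ac by simp
  then have "pl v \<one>" using pl_lmultD ac by blast
  then show ?thesis using pl_one_P SS_P v by simp
qed


definition ishead :: "'a \<Rightarrow> 'a \<Rightarrow> bool" where
  "ishead a h \<longleftrightarrow> h \<in> SS \<and> pl h a \<and> (\<forall>v\<in>SS. pl v a \<longrightarrow> pl v h)"

lemma head_ex: assumes "a \<in> P" shows "\<exists>h. ishead a h"
proof -
  have ac: "a \<in> carrier G" using assms P_carr' by auto
  obtain m where m: "pl m D" "pl m a" "\<And>c. pl c D \<Longrightarrow> pl c a \<Longrightarrow> pl c m" using glb_E[of D a] ac by auto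
  have "pl \<one> m" using m(3)[of \<one>] assms D_P by (simp add: pl_one)
  then have "m \<in> SS" using m by (simp add: SS_I)
  then show ?thesis unfolding ishead_def using m SS_pl by blast
qed
lemma head_unique: "ishead a h \<Longrightarrow> ishead a h' \<Longrightarrow> h = h'"
  unfolding ishead_def using pl_antisym by blast

lemma list_prod_Nil[simp]: "list_prod G [] = \<one>" by (simp add: list_prod_def)
lemma list_prod_Cons[simp]: "list_prod G (x # xs) = x \<otimes> list_prod G xs" by (simp add: list_prod_def)
lemma list_prod_P: "set xs \<subseteq> SS \<Longrightarrow> list_prod G xs \<in> P"
  by (induction xs) (auto intro: mult_P SS_P)
lemma list_prod_carr: "set xs \<subseteq> carrier G \<Longrightarrow> list_prod G xs \<in> carrier G"
  by (induction xs) auto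
lemma list_prod_append: "set xs \<subseteq> carrier G \<Longrightarrow> set ys \<subseteq> carrier G \<Longrightarrow>
  list_prod G (xs @ ys) = list_prod G xs \<otimes> list_prod G ys"
  by (induction xs) (auto simp: m_assoc list_prod_carr)
lemma list_prod_conj: "set xs \<subseteq> carrier G \<Longrightarrow> c \<in> carrier G \<Longrightarrow>
  list_prod G (map (\<lambda>x. conj G x c) xs) = conj G (list_prod G xs) c"
  by (induction xs) (auto simp: conj_mult list_prod_carr)

definition Mn :: "nat \<Rightarrow> 'a \<Rightarrow> bool" where
  "Mn n a \<longleftrightarrow> (\<exists>xs. length xs = n \<and> set xs \<subseteq> SS \<and> list_prod G xs = a)"

lemma Mn_P: "Mn n a \<Longrightarrow> a \<in> P" unfolding Mn_def using list_prod_P by auto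
lemma SS_carr_set: "set xs \<subseteq> SS \<Longrightarrow> set xs \<subseteq> carrier G" using SS_carr by auto

lemma Mn_0: "Mn 0 a \<longleftrightarrow> a = \<one>" unfolding Mn_def by auto
lemma Mn_Suc: "Mn (Suc n) a \<longleftrightarrow> (\<exists>s q. s \<in> SS \<and> Mn n q \<and> a = s \<otimes> q)"
proof
  assume "Mn (Suc n) a"
  then obtain xs where xs: "length xs = Suc n" "set xs \<subseteq> SS" "list_prod G xs = a" unfolding Mn_def by blast
  then obtain x ys where "xs = x # ys" by (cases xs) auto
  then show "\<exists>s q. s \<in> SS \<and> Mn n q \<and> a = s \<otimes> q" using xs unfolding Mn_def by auto
next
  assume "\<exists>s q. s \<in> SS \<and> Mn n q \<and> a = s \<otimes> q"
  then obtain s q ys where "s \<in> SS" "length ys = n" "set ys \<subseteq> SS" "list_prod G ys = q" "a = s \<otimes> q"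
    unfolding Mn_def by blast
  then show "Mn (Suc n) a" unfolding Mn_def by (intro exI[of _ "s # ys"]) auto
qed

lemma head_simple: "s \<in> SS \<Longrightarrow> ishead s s"
  unfolding ishead_def using SS_carr pl_refl by auto

lemma remainder: "Mn (Suc n) q \<Longrightarrow> ishead q h \<Longrightarrow> Mn n (inv h \<otimes> q)"
proof (induction n arbitrary: q h)
  case 0
  then obtain s where s: "s \<in> SS" "q = s" using Mn_Suc Mn_0 SS_carr by fastforce
  then have "h = s" using head_unique head_simple 0 by blast
  then show ?case using s SS_carr by (simp add: Mn_0)
next
  case (Suc m)
  obtain s q' where sq: "s \<in> SS" "Mn (Suc m) q'" "q = s \<otimes> q'" using Suc.prems Mn_Suc by blast
  have q'P: "q' \<in> P" using sq Mn_P by blast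
  obtain t where t: "ishead q' t" using head_ex q'P by blast
  have IH: "Mn m (inv t \<otimes> q')" using Suc.IH sq t by blast
  have ac: "s \<in> carrier G" "q' \<in> carrier G" "t \<in> carrier G" using sq q'P t P_carr' SS_carr
    by (auto simp: ishead_def)
  have tSS: "t \<in> SS" using t ishead_def by auto
  have stP: "s \<otimes> t \<in> P" using mult_P SS_P sq tSS by auto
  obtain h2 where h2: "ishead (s \<otimes> t) h2" using head_ex stP by blast
  have h2q: "ishead q h2" unfolding ishead_def
  proof (intro conjI ballI impI)
    show "h2 \<in> SS" using h2 ishead_def by auto
    have "pl (s \<otimes> t) (s \<otimes> q')" using pl_lmultI t ac ishead_def by auto
    then show "pl h2 q" using h2 sq pl_trans ishead_def by blast
  next
    fix v assume v: "v \<in> SS" "pl v q"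
    have "pl v (s \<otimes> t)"
      by (rule H_lemma[of s q' v t]) (use SS_P sq q'P v t ac ishead_def in auto)
    then show "pl v h2" using h2 v ishead_def by auto
  qed
  have hh: "h = h2" using head_unique h2q Suc.prems by blast
  have "pl s (s \<otimes> t)" using pl_rightI ac SS_P tSS by simp
  then have "pl s h2" using h2 sq ishead_def by auto
  then obtain e where e: "e \<in> P" "h2 = s \<otimes> e" using pl_E by metis
  have ec: "e \<in> carrier G" using e P_carr' by auto
  have "pl (s \<otimes> e) (s \<otimes> t)" using h2 e ishead_def by auto
  then have et: "pl e t" using pl_lmultD ac ec by blast
  have cSS: "inv e \<otimes> t \<in> SS" using suffix_SS e et tSS by blast
  have "inv h \<otimes> q = (inv e \<otimes> t) \<otimes> (inv t \<otimes> q')"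
    using hh e sq ac ec by (simp add: inv_mult_group m_assoc)
  then show ?case using Mn_Suc cSS IH by blast
qed


lemma Mn_conj: assumes "Mn n q" shows "Mn n (conj G q (D [^] (k::int)))"
proof -
  obtain xs where xs: "length xs = n" "set xs \<subseteq> SS" "list_prod G xs = q" using assms Mn_def by auto
  have "list_prod G (map (\<lambda>x. conj G x (D [^] k)) xs) = conj G q (D [^] k)"
    using list_prod_conj[of xs "D [^] k"] xs SS_carr_set by simp
  moreover have "set (map (\<lambda>x. conj G x (D [^] k)) xs) \<subseteq> SS" using xs conj_SS by auto
  ultimately show ?thesis unfolding Mn_def using xs by (intro exI[of _ "map (\<lambda>x. conj G x (D [^] k)) xs"]) auto
qed

lemma Mn_mult: assumes "Mn n a" "Mn m b" shows "Mn (n + m) (a \<otimes> b)"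
proof -
  obtain xs where xs: "length xs = n" "set xs \<subseteq> SS" "list_prod G xs = a" using assms Mn_def by auto
  obtain ys where ys: "length ys = m" "set ys \<subseteq> SS" "list_prod G ys = b" using assms Mn_def by auto
  show ?thesis unfolding Mn_def using xs ys list_prod_append[of xs ys] SS_carr_set
    by (intro exI[of _ "xs @ ys"]) auto
qed

lemma Dinv_SS: assumes "h \<in> SS" shows "D \<otimes> inv h \<in> SS"
proof -
  have hc: "h \<in> carrier G" using assms SS_carr by auto
  have "D [^] (-1::int) = inv D" by (simp add: int_pow_neg)
  then have "conj G (inv h \<otimes> D) (D [^] (-1::int)) = D \<otimes> inv h" using hc
    by (simp add: conj_def m_assoc)
  then show ?thesis using conj_SS[OF dl_SS[OF assms], of "-1"] by simp
qed

lemma gen_form: "g \<in> generate G SS \<Longrightarrow> \<exists>m q n. Mn n q \<and> g = inv (D [^] (m::nat)) \<otimes> q"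
proof (induction rule: generate.induct)
  case one
  then show ?case using Mn_0 by (intro exI[of _ 0] exI[of _ \<one>]) auto
next
  case (incl h)
  have "Mn 1 h" using Mn_Suc[of 0 h] Mn_0 incl SS_carr by fastforce
  then show ?case using incl SS_carr by (intro exI[of _ 0] exI[of _ h] exI[of _ 1]) auto
next
  case (inv h)
  have hc: "h \<in> carrier G" using inv SS_carr by auto
  have "Mn 1 (D \<otimes> inv h)" using Mn_Suc[of 0 "D \<otimes> inv h"] Mn_0 Dinv_SS[OF inv] hc by fastforce
  moreover have "inv h = inv (D [^] (1::nat)) \<otimes> (D \<otimes> inv h)" using hc by (simp add: m_assoc[symmetric])
  ultimately show ?case by blast
next
  case (eng g1 g2)
  obtain m1 q1 n1 where 1: "Mn n1 q1" "g1 = inv (D [^] (m1::nat)) \<otimes> q1" using eng by blast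
  obtain m2 q2 n2 where 2: "Mn n2 q2" "g2 = inv (D [^] (m2::nat)) \<otimes> q2" using eng by blast
  have qc: "q1 \<in> carrier G" "q2 \<in> carrier G" using 1 2 Mn_P P_carr' by auto
  have ci: "conj G q1 (D [^] (- int m2)) = D [^] m2 \<otimes> q1 \<otimes> inv (D [^] m2)"
    by (simp add: conj_def int_pow_neg_int)
  have "g1 \<otimes> g2 = inv (D [^] (m2 + m1)) \<otimes> (conj G q1 (D [^] (- int m2)) \<otimes> q2)"
    unfolding ci 1 2 using qc by (simp add: nat_pow_mult[symmetric] inv_mult_group m_assoc)
  moreover have "Mn (n1 + n2) (conj G q1 (D [^] (- int m2)) \<otimes> q2)"
    using Mn_mult Mn_conj 1 2 by blast
  ultimately show ?case by blast
qed

lemma peelD: assumes "Mn n (D \<otimes> y)" "y \<in> P" shows "\<exists>n'. Mn n' y"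
proof (cases n)
  case 0
  have yc: "y \<in> carrier G" using assms P_carr' by auto
  have "D \<otimes> y = \<one>" using assms 0 Mn_0 by simp
  then have "y = inv D" using yc by (metis inv_equality D_carr inv_comm)
  then have "D = \<one>" using antisym_P D_P assms by simp
  then have "y = \<one>" using \<open>y = inv D\<close> by simp
  then show ?thesis using Mn_0 by blast
next
  case (Suc k)
  have yc: "y \<in> carrier G" using assms P_carr' by auto
  have "ishead (D \<otimes> y) D" unfolding ishead_def using D_SS pl_rightI assms SS_pl yc by auto
  then have "Mn k (inv D \<otimes> (D \<otimes> y))" using remainder assms Suc by blast
  then show ?thesis using yc by auto
qed

lemma P_Mn: assumes "a \<in> P" shows "\<exists>n. Mn n a"
proof -
  have "a \<in> generate G SS" using assms P_carr' gen by auto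
  then obtain m q n where mq: "Mn n q" "a = inv (D [^] (m::nat)) \<otimes> q" using gen_form by blast
  have qc: "q \<in> carrier G" using mq Mn_P P_carr' by auto
  have "q = D [^] m \<otimes> a" using mq qc by simp
  then have "Mn n (D [^] m \<otimes> a)" using mq by simp
  then show ?thesis
  proof (induction m arbitrary: n)
    case 0 then show ?case using assms P_carr' by auto
  next
    case (Suc m)
    have ac: "a \<in> carrier G" using assms P_carr' by auto
    have "D [^] Suc m = D \<otimes> D [^] m" by (rule nat_pow_Suc2) simp
    then have "D [^] Suc m \<otimes> a = D \<otimes> (D [^] m \<otimes> a)" using ac by (simp add: m_assoc)
    moreover have "D [^] m \<otimes> a \<in> P"
    proof -
      have "D [^] m \<in> P" by (induction m) (auto intro: mult_P D_P)
      then show ?thesis using mult_P assms by blast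
    qed
    ultimately show ?case using peelD Suc by metis
  qed
qed


fun nrm :: "'a list \<Rightarrow> bool" where
  "nrm [] = True"
| "nrm (x # xs) = (x \<noteq> \<one> \<and> x \<in> SS \<and> (\<forall>v\<in>SS. pl v (x \<otimes> list_prod G xs) \<longrightarrow> pl v x) \<and> nrm xs)"

lemma nrm_SS: "nrm xs \<Longrightarrow> set xs \<subseteq> SS" by (induction xs) auto

lemma nrm_exists: "Mn n a \<Longrightarrow> \<exists>xs. nrm xs \<and> list_prod G xs = a"
proof (induction n arbitrary: a)
  case 0 then show ?case using Mn_0 by (intro exI[of _ "[]"]) auto
next
  case (Suc n)
  have aP: "a \<in> P" using Suc Mn_P by blast
  have ac: "a \<in> carrier G" using aP P_carr' by auto
  obtain h where h: "ishead a h" using head_ex aP by blast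
  have hc: "h \<in> carrier G" using h ishead_def SS_carr by auto
  have "Mn n (inv h \<otimes> a)" using remainder Suc h by blast
  then obtain xs where xs: "nrm xs" "list_prod G xs = inv h \<otimes> a" using Suc.IH by blast
  show ?case
  proof (cases "h = \<one>")
    case True then show ?thesis using xs ac by auto
  next
    case False
    have "h \<otimes> list_prod G xs = a" using xs hc ac by simp
    then have "nrm (h # xs)" using False h xs unfolding ishead_def by simp
    then show ?thesis using \<open>h \<otimes> list_prod G xs = a\<close> by (intro exI[of _ "h # xs"]) simp
  qed
qed

lemma nrm_unique: "nrm xs \<Longrightarrow> nrm ys \<Longrightarrow> list_prod G xs = list_prod G ys \<Longrightarrow> xs = ys"
proof (induction xs arbitrary: ys)
  case Nil
  show ?case
  proof (cases ys)
    case (Cons y ys')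
    have yc: "y \<in> SS" "list_prod G ys' \<in> P" using Nil Cons nrm_SS list_prod_P by auto
    have "pl y (y \<otimes> list_prod G ys')" using pl_rightI yc SS_carr by auto
    then have "pl y \<one>" using Nil Cons by simp
    then have "y = \<one>" using pl_one_P SS_P yc by auto
    then show ?thesis using Nil Cons by simp
  qed simp
next
  case (Cons x xs)
  show ?case
  proof (cases ys)
    case Nil
    have yc: "x \<in> SS" "list_prod G xs \<in> P" using Cons nrm_SS list_prod_P by auto
    have "pl x (x \<otimes> list_prod G xs)" using pl_rightI yc SS_carr by auto
    then have "pl x \<one>" using Cons Nil by simp
    then have "x = \<one>" using pl_one_P SS_P yc by auto
    then show ?thesis using Cons by simp
  next
    case (Cons y ys')
    note c = Cons
    have xc: "x \<in> SS" "list_prod G xs \<in> P" using Cons.prems nrm_SS list_prod_P by auto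
    have yc: "y \<in> SS" "list_prod G ys' \<in> P" using Cons.prems c nrm_SS list_prod_P by auto
    have eq: "x \<otimes> list_prod G xs = y \<otimes> list_prod G ys'" using Cons.prems c by simp
    have "pl x (x \<otimes> list_prod G xs)" using pl_rightI xc SS_carr by auto
    then have "pl x y" using Cons.prems c eq xc by simp
    moreover have "pl y (y \<otimes> list_prod G ys')" using pl_rightI yc SS_carr by auto
    then have "pl y x" using Cons.prems c eq yc by simp
    ultimately have xy: "x = y" using pl_antisym by blast
    then have "list_prod G xs = list_prod G ys'" using eq xc yc SS_carr P_carr' by simp
    then have "xs = ys'" using Cons.IH Cons.prems c by simp
    then show ?thesis using xy c by simp
  qed
qed

definition idx :: "'a list \<Rightarrow> bool" where
  "idx xs \<longleftrightarrow> (\<forall>i<length xs. xs ! i \<noteq> \<one> \<and>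
        xs ! i \<in> SS \<and> pl (xs ! i) (list_prod G (drop i xs)) \<and>
        (\<forall>s\<in>SS. pl s (list_prod G (drop i xs)) \<longrightarrow> pl s (xs ! i)))"

lemma all_lt_Suc: "(\<forall>i<Suc n. Q i) \<longleftrightarrow> Q 0 \<and> (\<forall>i<n. Q (Suc i))"
  by (auto simp: less_Suc_eq_0_disj)

lemma idx_Cons: "idx (x # xs) \<longleftrightarrow> (x \<noteq> \<one> \<and> x \<in> SS \<and> pl x (x \<otimes> list_prod G xs) \<and>
   (\<forall>s\<in>SS. pl s (x \<otimes> list_prod G xs) \<longrightarrow> pl s x)) \<and> idx xs"
  unfolding idx_def length_Cons all_lt_Suc by simp

lemma nrm_idx: "nrm xs \<longleftrightarrow> idx xs"
proof (induction xs)
  case Nil then show ?case by (simp add: idx_def)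
next
  case (Cons x xs)
  show ?case
  proof
    assume "nrm (x # xs)"
    moreover then have "pl x (x \<otimes> list_prod G xs)" using pl_rightI nrm_SS list_prod_P SS_carr by auto
    ultimately show "idx (x # xs)" using Cons.IH idx_Cons by simp
  next
    assume "idx (x # xs)"
    then show "nrm (x # xs)" using Cons.IH idx_Cons by simp
  qed
qed


lemma Dpow_nat_P: "D [^] (n::nat) \<in> P"
  by (induction n) (auto intro: mult_P D_P)
lemma Dpow_int_P: "k \<ge> 0 \<Longrightarrow> D [^] (k::int) \<in> P"
  using Dpow_nat_P[of "nat k"] by (simp add: pow_nat)

lemma Dpow_ne1: assumes "D \<noteq> \<one>" "n \<ge> 1" shows "D [^] (n::nat) \<noteq> \<one>"
proof
  assume h: "D [^] n = \<one>"
  obtain j where j: "n = Suc j" using assms by (cases n) auto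
  have "D [^] n = D \<otimes> D [^] j" using j nat_pow_Suc2[of D j] by simp
  then have "D \<otimes> D [^] j = \<one>" using h by simp
  then have "inv D = D [^] j" by (metis inv_equality D_carr nat_pow_closed inv_comm)
  then have "inv D \<in> P" using Dpow_nat_P by simp
  then have "D = \<one>" using antisym_P[OF D_P] by blast
  then show False using assms by simp
qed

lemma Dpow_diff: "inv (D [^] (k::int)) \<otimes> D [^] l = D [^] (l - k)"
  using Dpow_add[of "-k" l] by (simp add: int_pow_neg)

lemma Dpow_le: assumes "D \<noteq> \<one>" shows "pl (D [^] (k::int)) (D [^] l) \<longleftrightarrow> k \<le> l"
proof
  assume "k \<le> l" then show "pl (D [^] k) (D [^] l)" using Dpow_int_P[of "l - k"] Dpow_diff
    by (simp add: pl_def')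
next
  assume "pl (D [^] k) (D [^] l)"
  then have h: "D [^] (l - k) \<in> P" using Dpow_diff by (simp add: pl_def')
  show "k \<le> l"
  proof (rule ccontr)
    assume "\<not> k \<le> l"
    define j where "j = nat (k - l)"
    have j1: "j \<ge> 1" using \<open>\<not> k \<le> l\<close> j_def by simp
    have "l - k = - int j" using \<open>\<not> k \<le> l\<close> j_def by simp
    then have "inv (D [^] j) \<in> P" using h by (simp add: int_pow_neg_int)
    then have "D [^] j = \<one>" using antisym_P Dpow_nat_P by blast
    then show False using Dpow_ne1 assms j1 by blast
  qed
qed

lemma Mn_le_Dpow: "Mn n q \<Longrightarrow> pl q (D [^] (int n))"
proof (induction n arbitrary: q)
  case 0 then show ?case using Mn_0 pl_refl by simp
next
  case (Suc n)
  obtain s q' where sq: "s \<in> SS" "Mn n q'" "q = s \<otimes> q'" using Suc.prems Mn_Suc by blast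
  have sc: "s \<in> carrier G" using sq SS_carr by auto
  have "pl (s \<otimes> q') (s \<otimes> D [^] (int n))" using pl_lmultI Suc.IH sq sc by blast
  moreover have "s \<otimes> D [^] (int n) = D [^] (int n) \<otimes> conj G s (D [^] (int n))"
    using sc by (simp add: conj_def m_assoc[symmetric])
  moreover have "pl (conj G s (D [^] (int n))) D" using conj_SS sq SS_pl by blast
  then have "pl (D [^] (int n) \<otimes> conj G s (D [^] (int n))) (D [^] (int n) \<otimes> D)"
    using pl_lmultI by simp
  moreover have "D [^] (int n) \<otimes> D = D [^] (int (Suc n))" using Dpow_add[of "int n" 1] by (simp add: add.commute)
  ultimately show ?case using sq pl_trans by metis
qed

lemma ginf_spec: assumes Y: "Y \<in> carrier G" and D1: "D \<noteq> \<one>"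
  shows "pl (D [^] ginf G P D Y) Y" "\<And>q. pl (D [^] q) Y \<Longrightarrow> q \<le> ginf G P D Y"
proof -
  have "Y \<in> generate G SS" using Y gen by simp
  then obtain m q n where mq: "Mn n q" "Y = inv (D [^] (m::nat)) \<otimes> q" using gen_form by blast
  have qc: "q \<in> carrier G" using mq Mn_P P_carr' by auto
  define A where "A = {p::int. pl (D [^] p) Y}"
  have mA: "- int m \<in> A"
  proof -
    have "inv (D [^] (- int m)) \<otimes> Y = q" using mq qc by (simp add: int_pow_neg_int)
    then show ?thesis using Mn_P mq Y unfolding A_def by (simp add: pl_def')
  qed
  have bnd: "p \<le> int n - int m" if "p \<in> A" for p
  proof -
    have "pl (D [^] p) Y" using that A_def by simp
    then have "pl (D [^] m \<otimes> D [^] p) (D [^] m \<otimes> Y)" using pl_lmultI by simp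
    moreover have "D [^] m \<otimes> Y = q" using mq qc by simp
    moreover have "D [^] m \<otimes> D [^] p = D [^] (int m + p)" using Dpow_add[of "int m" p] by (simp add: int_pow_int)
    ultimately have "pl (D [^] (int m + p)) q" by simp
    then have "pl (D [^] (int m + p)) (D [^] (int n))" using Mn_le_Dpow mq pl_trans by blast
    then show ?thesis using Dpow_le D1 by simp
  qed
  define B where "B = A \<inter> {- int m .. int n - int m}"
  have fB: "finite B" unfolding B_def by simp
  have neB: "B \<noteq> {}" using mA bnd B_def by auto
  define M where "M = Max B"
  have MB: "M \<in> B" using fB neB M_def by simp
  have Mmax: "p \<le> M" if "p \<in> A" for p
  proof (cases "p < - int m")
    case True then show ?thesis using MB B_def by auto
  next
    case False then have "p \<in> B" using that bnd B_def by auto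
    then show ?thesis using fB M_def by simp
  qed
  have "ginf G P D Y = M" unfolding ginf_def
    by (rule Greatest_equality) (use MB B_def A_def Mmax in auto)
  then show "pl (D [^] ginf G P D Y) Y" "\<And>q. pl (D [^] q) Y \<Longrightarrow> q \<le> ginf G P D Y"
    using MB B_def A_def Mmax by auto
qed


lemma lnf_ex1: assumes Y: "Y \<in> carrier G" and D1: "D \<noteq> \<one>"
  shows "\<exists>!xs. is_lnf G P D Y (ginf G P D Y) xs"
proof -
  define p where "p = ginf G P D Y"
  have "pl (D [^] p) Y" unfolding p_def by (rule ginf_spec(1)[OF Y D1])
  then have aP: "inv (D [^] p) \<otimes> Y \<in> P" by (simp add: pl_def')
  then obtain n where "Mn n (inv (D [^] p) \<otimes> Y)" using P_Mn by blast
  then obtain xs where xs: "nrm xs" "list_prod G xs = inv (D [^] p) \<otimes> Y" using nrm_exists by blast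
  have Yx: "Y = D [^] p \<otimes> list_prod G xs" using xs Y by simp
  have "idx xs" using xs nrm_idx by simp
  then have l: "is_lnf G P D Y p xs" unfolding is_lnf_def idx_def using Yx p_def by blast
  have u: "ys = xs" if "is_lnf G P D Y p ys" for ys
  proof -
    have ys0: "Y = D [^] p \<otimes> list_prod G ys \<and> idx ys" using that unfolding is_lnf_def idx_def
      by blast
    then have ys: "Y = D [^] p \<otimes> list_prod G ys" "idx ys" by blast+
    have "nrm ys" using ys nrm_idx by simp
    then have "list_prod G ys \<in> carrier G" using nrm_SS list_prod_P P_carr' by blast
    then have "list_prod G ys = inv (D [^] p) \<otimes> Y" using ys(1) by simp
    then have "list_prod G ys = list_prod G xs" using xs(2) by simp
    then show ?thesis using nrm_unique xs \<open>nrm ys\<close> by blast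
  qed
  have "\<exists>!xs. is_lnf G P D Y p xs" using l u by blast
  then show ?thesis unfolding p_def .
qed

lemma lnf_props: assumes Y: "Y \<in> carrier G" and D1: "D \<noteq> \<one>"
  shows "nrm (lnf_factors G P D Y)" "Y = D [^] (ginf G P D Y) \<otimes> list_prod G (lnf_factors G P D Y)"
proof -
  have "is_lnf G P D Y (ginf G P D Y) (lnf_factors G P D Y)"
    unfolding lnf_factors_def using theI'[OF lnf_ex1[OF Y D1]] .
  then have "idx (lnf_factors G P D Y) \<and> Y = D [^] (ginf G P D Y) \<otimes> list_prod G (lnf_factors G P D Y)"
    unfolding is_lnf_def idx_def by (elim conjE) (rule conjI; assumption)
  then show "nrm (lnf_factors G P D Y)" "Y = D [^] (ginf G P D Y) \<otimes> list_prod G (lnf_factors G P D Y)"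
    using nrm_idx by simp_all
qed

lemma nrm_Cons_tail: "nrm (x # xs) \<Longrightarrow> nrm xs" by simp

lemma nrm_butlast: "nrm (ys @ [x]) \<Longrightarrow> nrm ys"
proof (induction ys)
  case Nil then show ?case by simp
next
  case (Cons y ys)
  have s0: "set (y # ys @ [x]) \<subseteq> SS" using nrm_SS[OF Cons.prems] by simp
  then have s: "set (ys @ [x]) \<subseteq> SS" "y \<in> SS" by auto
  have c: "list_prod G ys \<in> carrier G" "x \<in> carrier G" "y \<in> carrier G"
    using s SS_carr list_prod_carr by auto
  have "list_prod G (ys @ [x]) = list_prod G ys \<otimes> x"
    using list_prod_append[of ys "[x]"] s SS_carr_set c by simp
  then have e: "y \<otimes> list_prod G (ys @ [x]) = (y \<otimes> list_prod G ys) \<otimes> x" using c by (simp add: m_assoc)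
  have le: "pl (y \<otimes> list_prod G ys) (y \<otimes> list_prod G (ys @ [x]))"
    unfolding e using pl_rightI SS_P s c by simp
  have "\<forall>v\<in>SS. pl v (y \<otimes> list_prod G ys) \<longrightarrow> pl v y"
    using Cons.prems le pl_trans by auto
  then show ?case using Cons by simp
qed

lemma nrm_last2: "nrm (ys @ [x]) \<Longrightarrow> ys \<noteq> [] \<Longrightarrow> nrm [last ys, x]"
proof (induction ys)
  case Nil then show ?case by simp
next
  case (Cons y ys)
  show ?case
  proof (cases "ys = []")
    case True then show ?thesis using Cons by simp
  next
    case False then show ?thesis using Cons by simp
  qed
qed

lemma w_P: assumes "nrm xs" shows "inv (list_prod G xs) \<otimes> D [^] (int (length xs)) \<in> P"
proof -
  have "Mn (length xs) (list_prod G xs)" unfolding Mn_def using nrm_SS assms by blast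
  then show ?thesis using Mn_le_Dpow by (simp add: pl_def')
qed

lemma unconj: "v \<in> carrier G \<Longrightarrow> v = conj G (conj G v (D [^] (-1::int))) (D [^] (1::int))"
  using conj_cancel[of v "-1"] by simp

lemma T_lemma: "nrm xs \<Longrightarrow> xs \<noteq> [] \<Longrightarrow> u \<in> SS \<Longrightarrow>
  pl u (inv (list_prod G xs) \<otimes> D [^] (int (length xs))) \<Longrightarrow> pl u (inv (last xs) \<otimes> D)"
proof (induction xs arbitrary: u rule: rev_induct)
  case Nil then show ?case by simp
next
  case (snoc x ys)
  have sx: "set (ys @ [x]) \<subseteq> SS" using snoc.prems nrm_SS by blast
  then have xS: "x \<in> SS" and ysS: "set ys \<subseteq> SS" by auto
  have xc: "x \<in> carrier G" using xS SS_carr by auto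
  show ?case
  proof (cases "ys = []")
    case True then show ?thesis using snoc.prems xc by simp
  next
    case False
    have nys: "nrm ys" using nrm_butlast snoc.prems by blast
    define b where "b = list_prod G ys"
    define r where "r = length ys"
    define w where "w = inv b \<otimes> D [^] (int r)"
    define y where "y = last ys"
    have bc: "b \<in> carrier G" using b_def ysS SS_carr_set list_prod_carr by blast
    have yS: "y \<in> SS" using y_def False ysS by auto
    have yc: "y \<in> carrier G" using yS SS_carr by auto
    have wP: "w \<in> P" using w_P nys w_def b_def r_def by blast
    have wc: "w \<in> carrier G" using wP P_carr' by auto
    have prod: "list_prod G (ys @ [x]) = b \<otimes> x"
      using list_prod_append[of ys "[x]"] ysS SS_carr_set xc b_def by simp
    have pw: "D [^] (int (length (ys @ [x]))) = D [^] (int r) \<otimes> D"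
      using Dpow_add[of "int r" 1] r_def by (simp add: add.commute)
    have weq: "inv (list_prod G (ys @ [x])) \<otimes> D [^] (int (length (ys @ [x])))
       = (inv x \<otimes> D) \<otimes> conj G w (D [^] (1::int))"
      unfolding prod pw w_def using bc xc by (simp add: conj_def m_assoc inv_mult_group)
    have dx: "inv x \<otimes> D \<in> SS" using dl_SS xS by blast
    have dy: "inv y \<otimes> D \<in> SS" using dl_SS yS by blast
    have c0: "conj G (inv y \<otimes> D) (D [^] (1::int)) \<in> SS" using conj_SS dy by blast
    have hd: "pl v (conj G (inv y \<otimes> D) (D [^] (1::int)))"
      if v: "v \<in> SS" "pl v (conj G w (D [^] (1::int)))" for v
    proof -
      have vc: "v \<in> carrier G" using v SS_carr by auto
      define v' where "v' = conj G v (D [^] (-1::int))"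
      have v'S: "v' \<in> SS" using conj_SS v v'_def by blast
      have ve: "v = conj G v' (D [^] (1::int))" unfolding v'_def by (rule unconj[OF vc])
      have "pl (conj G v' (D [^] (1::int))) (conj G w (D [^] (1::int)))" using v(2) ve by simp
      then have "pl v' w" using conj_pl_iff v'S SS_carr wc by blast
      then have "pl v' (inv y \<otimes> D)" using snoc.IH[OF nys False v'S] w_def b_def r_def y_def by simp
      then have "pl (conj G v' (D [^] (1::int))) (conj G (inv y \<otimes> D) (D [^] (1::int)))" using conj_pl by blast
      then show ?thesis using ve by simp
    qed
    have u1: "pl u ((inv x \<otimes> D) \<otimes> conj G w (D [^] (1::int)))"
      using snoc.prems(4) unfolding weq .
    have u2: "pl u ((inv x \<otimes> D) \<otimes> conj G (inv y \<otimes> D) (D [^] (1::int)))"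
      by (rule H_lemma[OF SS_P[OF dx] conjP[OF wP] snoc.prems(3) SS_carr[OF c0] hd u1])
    have cop: "v = \<one>" if v: "v \<in> SS" "pl v (inv (inv x \<otimes> D) \<otimes> D)"
         "pl v (conj G (inv y \<otimes> D) (D [^] (1::int)))" for v
    proof -
      have vc: "v \<in> carrier G" using v SS_carr by auto
      define v' where "v' = conj G v (D [^] (-1::int))"
      have v'S: "v' \<in> SS" using conj_SS v v'_def by blast
      have ve: "v = conj G v' (D [^] (1::int))" unfolding v'_def by (rule unconj[OF vc])
      have "inv (inv x \<otimes> D) \<otimes> D = conj G x (D [^] (1::int))" using dl_dl xc by simp
      then have "pl (conj G v' (D [^] (1::int))) (conj G x (D [^] (1::int)))" using v(2) ve by simp
      then have a1: "pl v' x" using conj_pl_iff v'S SS_carr xc by blast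
      have "pl (conj G v' (D [^] (1::int))) (conj G (inv y \<otimes> D) (D [^] (1::int)))" using v(3) ve by simp
      then have a2: "pl v' (inv y \<otimes> D)" using conj_pl_iff v'S SS_carr dy by blast
      have n2: "nrm [y, x]" using nrm_last2 snoc.prems False y_def by blast
      have "v' = \<one>"
        by (rule greedy_cop[of y x x]) (use yS xc pl_refl n2 xc v'S a1 a2 in auto)
      then show ?thesis using ve by simp
    qed
    have "pl u (inv x \<otimes> D)" by (rule pair_lemma[OF dx c0 cop snoc.prems(3) u2])
    then show ?thesis by simp
  qed
qed


lemma nrm_ne1: "nrm xs \<Longrightarrow> x \<in> set xs \<Longrightarrow> x \<noteq> \<one>"
  by (induction xs) auto

lemma nrm_bound: assumes n: "nrm xs" and D1: "D \<noteq> \<one>"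
  shows "pl (list_prod G xs) (D [^] (k::int)) \<longleftrightarrow> int (length xs) \<le> k"
proof
  have "Mn (length xs) (list_prod G xs)" unfolding Mn_def using nrm_SS n by blast
  then have a: "pl (list_prod G xs) (D [^] (int (length xs)))" using Mn_le_Dpow by blast
  assume "int (length xs) \<le> k"
  then have "pl (D [^] (int (length xs))) (D [^] k)" using Dpow_le D1 by blast
  then show "pl (list_prod G xs) (D [^] k)" using a pl_trans by blast
next
  assume h: "pl (list_prod G xs) (D [^] k)"
  show "int (length xs) \<le> k"
  proof (rule ccontr)
    assume "\<not> int (length xs) \<le> k"
    then have kk: "k \<le> int (length xs) - 1" by simp
    then have "pl (D [^] k) (D [^] (int (length xs) - 1))" using Dpow_le D1 by blast
    then have h2: "pl (list_prod G xs) (D [^] (int (length xs) - 1))" using h pl_trans by blast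
    show False
    proof (cases "xs = []")
      case True
      then have "pl (D [^] (0::int)) (D [^] (-1::int))" using h2 by simp
      then show False using Dpow_le[OF D1, of 0 "-1"] by simp
    next
      case False
      define a where "a = list_prod G xs"
      have ac: "a \<in> carrier G" using a_def nrm_SS n list_prod_P P_carr' by blast
      define v where "v = inv a \<otimes> D [^] (int (length xs) - 1)"
      have vP: "v \<in> P" using h2 v_def a_def by (simp add: pl_def')
      have "D [^] (int (length xs)) = D [^] (int (length xs) - 1) \<otimes> D"
        using Dpow_add[of "int (length xs) - 1" 1] by simp
      then have weq: "inv a \<otimes> D [^] (int (length xs)) = v \<otimes> D" unfolding v_def using ac by (simp add: m_assoc)
      have "pl D (v \<otimes> D)" using D_le_aD vP by blast
      then have "pl D (inv (last xs) \<otimes> D)"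
        using T_lemma[OF n False D_SS] weq a_def by simp
      moreover have "last xs \<in> set xs" using False by simp
      then have lS: "last xs \<in> SS" using nrm_SS[OF n] by blast
      ultimately have "inv D \<otimes> (inv (last xs) \<otimes> D) \<in> P" by (simp add: pl_def')
      then have "conj G (inv (last xs)) (D [^] (1::int)) \<in> P" using SS_carr[OF lS] by (simp add: conj_def m_assoc)
      then have "conj G (conj G (inv (last xs)) (D [^] (1::int))) (D [^] (- 1::int)) \<in> P" by (rule conjP)
      then have "inv (last xs) \<in> P" using conj_cancel[of "inv (last xs)" 1] lS SS_carr by simp
      then have "last xs = \<one>" using antisym_P SS_P lS by blast
      moreover have "last xs \<noteq> \<one>" using nrm_ne1 n False by simp
      ultimately show False by simp
    qed
  qed
qed

lemma ginf_inv: assumes Y: "Y \<in> carrier G" and D1: "D \<noteq> \<one>"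
  shows "ginf G P D (inv Y) = - gsup G P D Y"
proof -
  define p where "p = ginf G P D Y"
  define xs where "xs = lnf_factors G P D Y"
  have n: "nrm xs" and Ye: "Y = D [^] p \<otimes> list_prod G xs" using lnf_props[OF Y D1] p_def xs_def by auto
  have ac: "list_prod G xs \<in> carrier G" using nrm_SS n list_prod_P P_carr' by blast
  have C1: "pl Y (D [^] t) \<longleftrightarrow> p + int (length xs) \<le> t" for t :: int
  proof -
    have e: "D [^] t = D [^] p \<otimes> D [^] (t - p)" using Dpow_add[of p "t - p"] by simp
    have "pl Y (D [^] t) \<longleftrightarrow> pl (D [^] p \<otimes> list_prod G xs) (D [^] p \<otimes> D [^] (t - p))"
      using Ye e by simp
    also have "\<dots> \<longleftrightarrow> pl (list_prod G xs) (D [^] (t - p))" by (rule pl_lmult) (use ac in simp_all)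
    also have "\<dots> \<longleftrightarrow> int (length xs) \<le> t - p" by (rule nrm_bound[OF n D1])
    finally show ?thesis by linarith
  qed
  have C2: "pl (D [^] q) (inv Y) \<longleftrightarrow> pl Y (D [^] (-q))" for q :: int
  proof -
    have dq: "D [^] (-q) = inv (D [^] q)" by (rule int_pow_neg) simp
    have e: "conj G (inv (D [^] q) \<otimes> inv Y) (D [^] (-q)) = inv Y \<otimes> D [^] (-q)"
      unfolding conj_def dq using Y by (simp add: m_assoc)
    have "inv (D [^] q) \<otimes> inv Y \<in> P \<longleftrightarrow> inv Y \<otimes> D [^] (-q) \<in> P"
    proof
      assume "inv (D [^] q) \<otimes> inv Y \<in> P"
      from conjP[OF this, of "-q"] show "inv Y \<otimes> D [^] (-q) \<in> P" unfolding e .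
    next
      assume "inv Y \<otimes> D [^] (-q) \<in> P"
      then have "conj G (conj G (inv (D [^] q) \<otimes> inv Y) (D [^] (-q))) (D [^] (- (-q))) \<in> P"
        unfolding e by (rule conjP)
      moreover have "conj G (conj G (inv (D [^] q) \<otimes> inv Y) (D [^] (-q))) (D [^] (- (-q)))
          = inv (D [^] q) \<otimes> inv Y" by (rule conj_cancel) (use Y in simp)
      ultimately show "inv (D [^] q) \<otimes> inv Y \<in> P" by simp
    qed
    then show ?thesis using Y by (simp add: pl_def')
  qed
  have G1: "pl (D [^] (- (p + int (length xs)))) (inv Y)" using C1 C2 by simp
  have G2: "q \<le> - (p + int (length xs))" if "pl (D [^] q) (inv Y)" for q
    using that C1 C2 by simp
  have "ginf G P D (inv Y) = - (p + int (length xs))" unfolding ginf_def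
    by (rule Greatest_equality[where P="\<lambda>q. pl (D [^] q) (inv Y)", OF G1 G2])
  then show ?thesis unfolding gsup_def p_def xs_def by simp
qed

lemma circ_eq: assumes Y: "Y \<in> carrier G"
  shows "circ G P D Y = Y \<otimes> D [^] (- ginf G P D Y)" by (simp add: circ_def)

lemma prefix_iota: assumes Y: "Y \<in> carrier G" and D1: "D \<noteq> \<one>" and s: "s \<in> SS" "s \<noteq> \<one>"
  and le: "pl s (circ G P D Y)"
  shows "pl s (iota G P D Y)"
proof -
  define p where "p = ginf G P D Y"
  define xs where "xs = lnf_factors G P D Y"
  have n: "nrm xs" and Ye: "Y = D [^] p \<otimes> list_prod G xs" using lnf_props[OF Y D1] p_def xs_def by auto
  have ac: "list_prod G xs \<in> carrier G" using nrm_SS n list_prod_P P_carr' by blast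
  have sc: "s \<in> carrier G" using s SS_carr by auto
  have ce: "circ G P D Y = conj G (list_prod G xs) (D [^] (-p))"
    unfolding circ_def p_def[symmetric] using Ye ac by (simp add: conj_def int_pow_neg m_assoc)
  define s' where "s' = conj G s (D [^] p)"
  have s'S: "s' \<in> SS" using conj_SS s s'_def by blast
  have se: "s = conj G s' (D [^] (-p))" using conj_cancel[of s p] sc s'_def by simp
  have "pl (conj G s' (D [^] (-p))) (conj G (list_prod G xs) (D [^] (-p)))" using le ce se by simp
  then have s'a: "pl s' (list_prod G xs)" using conj_pl_iff s'S SS_carr ac by blast
  show ?thesis
  proof (cases xs)
    case Nil
    then have "s' = \<one>" using s'a pl_one_P SS_P s'S by simp
    then have "s = \<one>" using se by simp
    then show ?thesis using s by simp
  next
    case (Cons x rest)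
    have "pl s' x" using n Cons s'a s'S by simp
    then have "pl (conj G s' (D [^] (-p))) (conj G x (D [^] (-p)))" by (rule conj_pl)
    moreover have "iota G P D Y = conj G x (D [^] (-p))"
      unfolding iota_def tau_pow_def using Cons xs_def p_def by simp
    ultimately show ?thesis using se by simp
  qed
qed

lemma step_lemma: assumes Z: "Z \<in> carrier G" and D1: "D \<noteq> \<one>" and s: "s \<in> SS" "s \<noteq> \<one>"
  and b: "b \<in> P" and le: "pl (s \<otimes> b) (circ G P D Z)"
  and eq: "ginf G P D (conj G Z s) = ginf G P D Z"
  shows "pl s (iota G P D Z) \<and> pl b (circ G P D (conj G Z s))"
proof
  have sc: "s \<in> carrier G" and bc: "b \<in> carrier G" using s b SS_carr P_carr' by auto
  have "pl s (s \<otimes> b)" using pl_rightI sc b by blast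
  then have "pl s (circ G P D Z)" using le pl_trans by blast
  then show "pl s (iota G P D Z)" by (rule prefix_iota[OF Z D1 s])
  define p where "p = ginf G P D Z"
  define e where "e = conj G s (D [^] (-p))"
  have eP: "e \<in> P" using conjP SS_P s e_def by blast
  have ec: "e \<in> carrier G" using eP P_carr' by auto
  have cZ: "circ G P D Z \<in> carrier G" using Z by (simp add: circ_def)
  have ce: "circ G P D (conj G Z s) = inv s \<otimes> circ G P D Z \<otimes> e"
    unfolding circ_def eq p_def[symmetric] e_def using Z sc by (simp add: conj_def int_pow_neg m_assoc)
  have "pl (inv s \<otimes> (s \<otimes> b)) (inv s \<otimes> circ G P D Z)" using pl_lmultI le sc by blast
  then have 1: "pl b (inv s \<otimes> circ G P D Z)" using sc bc by simp
  have "pl (inv s \<otimes> circ G P D Z) (inv s \<otimes> circ G P D Z \<otimes> e)" by (rule pl_rightI) (use eP sc cZ in simp_all)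
  then have "pl b (inv s \<otimes> circ G P D Z \<otimes> e)" using 1 by (rule pl_trans[rotated])
  then show "pl b (circ G P D (conj G Z s))" unfolding ce .
qed


lemma path_SS: "oriented_path G P D X Y ss \<Longrightarrow> set ss \<subseteq> SS"
  by (induction ss arbitrary: Y) (auto simp: minimal_simple_def)

lemma USS_carr: assumes "X \<in> carrier G" "Y \<in> USS G P D X" shows "Y \<in> carrier G"
proof -
  have "Y \<in> conjugates G X" using assms(2) unfolding USS_def SSS_def by blast
  then obtain a where "a \<in> carrier G" "Y = conj G X a" unfolding conjugates_def by blast
  then show ?thesis using assms(1) by simp
qed

lemma USS_eq: assumes "Y \<in> USS G P D X" "Y' \<in> USS G P D X"
  shows "ginf G P D Y' = ginf G P D Y \<and> gsup G P D Y' = gsup G P D Y"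
proof -
  have 1: "Y \<in> conjugates G X" "\<forall>Z\<in>conjugates G X. ginf G P D Z \<le> ginf G P D Y \<and> gsup G P D Y \<le> gsup G P D Z"
    using assms(1) unfolding USS_def SSS_def by blast+
  have 2: "Y' \<in> conjugates G X" "\<forall>Z\<in>conjugates G X. ginf G P D Z \<le> ginf G P D Y' \<and> gsup G P D Y' \<le> gsup G P D Z"
    using assms(2) unfolding USS_def SSS_def by blast+
  show ?thesis using 1 2 by force
qed

lemma main_loc: "X \<in> carrier G \<Longrightarrow> oriented_path G P D X Y ss \<Longrightarrow>
  (pl (list_prod G ss) (circ G P D Y) \<longrightarrow> black_path G P D Y ss) \<and>
  (pl (list_prod G ss) (circ G P D (inv Y)) \<longrightarrow> grey_path G P D Y ss)"
proof (induction ss arbitrary: Y)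
  case Nil then show ?case by simp
next
  case (Cons s ss)
  have YU: "Y \<in> USS G P D X" and ms: "minimal_simple G P D X Y s"
    and op: "oriented_path G P D X (conj G Y s) ss" using Cons.prems by auto
  have s: "s \<in> SS" "s \<noteq> \<one>" and YsU: "conj G Y s \<in> USS G P D X"
    using ms unfolding minimal_simple_def by auto
  have Yc: "Y \<in> carrier G" using USS_carr Cons.prems(1) YU by blast
  have sc: "s \<in> carrier G" using s SS_carr by auto
  have D1: "D \<noteq> \<one>"
  proof
    assume "D = \<one>"
    then have "pl s \<one>" using SS_pl s by simp
    then show False using pl_one_P SS_P s by blast
  qed
  have bP: "list_prod G ss \<in> P" using path_SS op list_prod_P by blast
  have eqs: "ginf G P D (conj G Y s) = ginf G P D Y" "gsup G P D (conj G Y s) = gsup G P D Y"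
    using USS_eq[OF YU YsU] by auto
  have IH: "(pl (list_prod G ss) (circ G P D (conj G Y s)) \<longrightarrow> black_path G P D (conj G Y s) ss) \<and>
    (pl (list_prod G ss) (circ G P D (inv (conj G Y s))) \<longrightarrow> grey_path G P D (conj G Y s) ss)"
    using Cons.IH[OF Cons.prems(1) op] .
  show ?case
  proof (intro conjI impI)
    assume h: "pl (list_prod G (s # ss)) (circ G P D Y)"
    have "pl (s \<otimes> list_prod G ss) (circ G P D Y)" using h by simp
    from step_lemma[OF Yc D1 s bP this eqs(1)]
    show "black_path G P D Y (s # ss)" using IH by simp
  next
    assume h: "pl (list_prod G (s # ss)) (circ G P D (inv Y))"
    have "pl (s \<otimes> list_prod G ss) (circ G P D (inv Y))" using h by simp
    moreover have ci: "conj G (inv Y) s = inv (conj G Y s)" using conj_inv Yc sc by blast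
    moreover have "ginf G P D (conj G (inv Y) s) = ginf G P D (inv Y)"
    proof -
      have "conj G Y s \<in> carrier G" using Yc sc by simp
      then have "ginf G P D (inv (conj G Y s)) = - gsup G P D (conj G Y s)" using ginf_inv D1 by blast
      also have "\<dots> = - gsup G P D Y" using eqs by simp
      also have "\<dots> = ginf G P D (inv Y)" using ginf_inv[OF Yc D1] by simp
      finally show ?thesis using ci by simp
    qed
    ultimately have "pl s (iota G P D (inv Y)) \<and> pl (list_prod G ss) (circ G P D (conj G (inv Y) s))"
      using step_lemma[of "inv Y" s "list_prod G ss"] Yc D1 s bP by blast
    then show "grey_path G P D Y (s # ss)" using IH ci by simp
  qed
qed

end

theorem mainTheorem5:
  fixes G :: "('a, 'b) monoid_scheme" and P :: "'a set" and \<Delta> X Y :: 'a and ss :: "'a list"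
  assumes "garside G P \<Delta>"
    and "X \<in> carrier G"
    and "oriented_path G P \<Delta> X Y ss"
  shows "(prec G P (list_prod G ss) (circ G P \<Delta> Y) \<longrightarrow> black_path G P \<Delta> Y ss)
       \<and> (prec G P (list_prod G ss) (circ G P \<Delta> (inv\<^bsub>G\<^esub> Y)) \<longrightarrow> grey_path G P \<Delta> Y ss)"
proof -
  have grp: "group G" using assms(1) unfolding garside_def by (elim conjE) assumption
  have "garloc G P \<Delta>" unfolding garloc_def garloc_axioms_def using grp assms(1) by simp
  then interpret garloc G P \<Delta> .
  show ?thesis using main_loc assms(2,3) by blast
qed

end
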